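(* Let $p,q\in[1,\infty]$, let $\varphi_0,\varphi_1,\varphi$ be positive non-degenerate quasi-concave functions on $(0,\infty)$, let $\{\tau_k\}$ be a discretizing sequence for $\varphi_0$, $\{z_k\}$ a discretizing sequence for $\varphi_1$, and $\{\widetilde t_k\}$ a discretizing sequence for $\varphi(\varphi_0,\varphi_1)$. Let $\overline l_q=\big(l_q,\,l_q(1/\widetilde t_k)\big)$. Then $$(\overline l_q)_{\varphi_0,p}=l_p\Big(l_q^{M_k^0}\Big(\frac1{\varphi_0(\widetilde t_i)}\Big)\Big),\qquad (\overline l_q)_{\varphi_1,p}=l_p\Big(l_q^{M_k^1}\Big(\frac1{\varphi_1(\widetilde t_i)}\Big)\Big),$$ where $M_k^0=\{i:\ \tau_k\le\widetilde t_i\le\tau_{k+1}\}$ and $M_k^1=\{i:\ z_k\le\widetilde t_i\le z_{k+1}\}$.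
   Context: A function $\psi:(0,\infty)\to(0,\infty)$ is non-degenerate quasi-concave if it is non-decreasing, $\psi(t)/t$ is non-increasing, and $\lim_{t\to0+}\psi(t)=\lim_{t\to\infty}\psi(t)/t=\lim_{t\to0+}t/\psi(t)=\lim_{t\to\infty}1/\psi(t)=0$. $\varphi(\varphi_0,\varphi_1)(t)=\varphi_0(t)\varphi(\varphi_1(t)/\varphi_0(t))$. A positive sequence is strongly increasing if $\inf_k a_{k+1}/a_k\ge2$, strongly decreasing if $\sup_k a_{k+1}/a_k\le1/2$. A strongly increasing $\{s_k\}_{k\in\mathbb Z}$ is a discretizing sequence for $\psi$ if $\{\psi(s_k)\}$ is strongly increasing, $\{\psi(s_k)/s_k\}$ is strongly decreasing, and $\mathbb Z=\mathbb Z_1\sqcup\mathbb Z_2$ with $\psi(s_{k+1})\le2\psi(s_k)$ for $k\in\mathbb Z_1$ and $\psi(s_k)/s_k\le2\psi(s_{k+1})/s_{k+1}$ for $k\in\mathbb Z_2$. For a Banach couple $\overline X$, $K(t,x;\overline X)=\inf_{x=x_0+x_1}(\|x_0\|_{X_0}+t\|x_1\|_{X_1})$, and $\overline X_{\psi,p}$ is the space of $x\in X_0+X_1$ with $\big(\sum_k(K(s_k,x;\overline X)/\psi(s_k))^p\big)^{1/p}<\infty$ (sup if $p=\infty$), $\{s_k\}$ the given discretizing sequence for $\psi$ (here $\{\tau_k\}$ for $\varphi_0$, $\{z_k\}$ for $\varphi_1$). For a sequence space $E$ and positive weight $u$, $E(u)=\{a:\{a_iu_i\}\in E\}$ with norm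 $\|\{a_iu_i\}\|_E$; $l_p(l_q^{M_k})$ has norm $\big(\sum_k(\sum_{i\in M_k}|a_i|^q)^{p/q}\big)^{1/p}$ (usual modification for $\infty$). Sequences are indexed by $\mathbb Z$; equality means equal sets with equivalent norms. *)

theory Defs
  imports "HOL-Analysis.Analysis"
begin

definition nd_quasi_concave :: "(real \<Rightarrow> real) \<Rightarrow> bool" where
  "nd_quasi_concave \<psi> \<longleftrightarrow>
     (\<forall>t>0. \<psi> t > 0) \<and>
     mono_on {0<..} \<psi> \<and>
     antimono_on {0<..} (\<lambda>t. \<psi> t / t) \<and>
     (\<psi> \<longlongrightarrow> 0) (at_right 0) \<and>
     ((\<lambda>t. \<psi> t / t) \<longlongrightarrow> 0) at_top \<and>
     ((\<lambda>t. t / \<psi> t) \<longlongrightarrow> 0) (at_right 0) \<and>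
     ((\<lambda>t. 1 / \<psi> t) \<longlongrightarrow> 0) at_top"

definition compose_qc :: "(real \<Rightarrow> real) \<Rightarrow> (real \<Rightarrow> real) \<Rightarrow> (real \<Rightarrow> real) \<Rightarrow> real \<Rightarrow> real" where
  "compose_qc \<phi> \<phi>0 \<phi>1 t = \<phi>0 t * \<phi> (\<phi>1 t / \<phi>0 t)"

definition strongly_increasing :: "(int \<Rightarrow> real) \<Rightarrow> bool" where
  "strongly_increasing a \<longleftrightarrow> (\<forall>k. a k > 0) \<and> (\<forall>k. a (k + 1) / a k \<ge> 2)"

definition strongly_decreasing :: "(int \<Rightarrow> real) \<Rightarrow> bool" where
  "strongly_decreasing a \<longleftrightarrow> (\<forall>k. a k > 0) \<and> (\<forall>k. a (k + 1) / a k \<le> 1 / 2)"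

definition discretizing_seq :: "(real \<Rightarrow> real) \<Rightarrow> (int \<Rightarrow> real) \<Rightarrow> bool" where
  "discretizing_seq \<psi> s \<longleftrightarrow>
     strongly_increasing s \<and>
     strongly_increasing (\<lambda>k. \<psi> (s k)) \<and>
     strongly_decreasing (\<lambda>k. \<psi> (s k) / s k) \<and>
     (\<exists>Z1 Z2. Z1 \<inter> Z2 = {} \<and> Z1 \<union> Z2 = (UNIV :: int set) \<and>
        (\<forall>k\<in>Z1. \<psi> (s (k + 1)) \<le> 2 * \<psi> (s k)) \<and>
        (\<forall>k\<in>Z2. \<psi> (s k) / s k \<le> 2 * (\<psi> (s (k + 1)) / s (k + 1))))"

section \<open>Sequence-space norms (valued in [0,\<infinity>]; \<infinity> means "not in the space")\<close>

definition enn_rpow :: "ennreal \<Rightarrow> real \<Rightarrow> ennreal" where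
  "enn_rpow x r = (if x = top then top else ennreal (enn2real x powr r))"

definition lp_on :: "ennreal \<Rightarrow> 'i set \<Rightarrow> ('i \<Rightarrow> ennreal) \<Rightarrow> ennreal" where
  "lp_on p A f = (if p = top then (SUP i\<in>A. f i)
                  else enn_rpow (\<Sum>\<^sub>\<infinity> i\<in>A. enn_rpow (f i) (enn2real p)) (1 / enn2real p))"

definition lq_norm :: "ennreal \<Rightarrow> (int \<Rightarrow> real) \<Rightarrow> ennreal" where
  "lq_norm q a = lp_on q UNIV (\<lambda>i. ennreal \<bar>a i\<bar>)"

definition weighted :: "((int \<Rightarrow> real) \<Rightarrow> ennreal) \<Rightarrow> (int \<Rightarrow> real) \<Rightarrow> (int \<Rightarrow> real) \<Rightarrow> ennreal" where
  "weighted E u a = E (\<lambda>i. a i * u i)"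

definition lp_lq_blocks :: "ennreal \<Rightarrow> ennreal \<Rightarrow> (int \<Rightarrow> int set) \<Rightarrow> (int \<Rightarrow> real) \<Rightarrow> ennreal" where
  "lp_lq_blocks p q M a = lp_on p UNIV (\<lambda>k. lp_on q (M k) (\<lambda>i. ennreal \<bar>a i\<bar>))"

text \<open>A Banach couple of sequence spaces is given by its two norms
  \<open>N0, N1\<close> (with value \<infinity> outside the respective space).\<close>
definition K_fun :: "((int \<Rightarrow> real) \<Rightarrow> ennreal) \<Rightarrow> ((int \<Rightarrow> real) \<Rightarrow> ennreal) \<Rightarrow> real \<Rightarrow> (int \<Rightarrow> real) \<Rightarrow> ennreal" where
  "K_fun N0 N1 t x = (INF x0. N0 x0 + ennreal t * N1 (\<lambda>i. x i - x0 i))"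

text \<open>Norm of \<open>(X\<^sub>0,X\<^sub>1)\<^sub>\<psi>\<^sub>,\<^sub>p\<close> w.r.t. the discretizing sequence \<open>s\<close>; the space is
  the set of \<open>x\<close> with finite norm (this forces \<open>x \<in> X\<^sub>0+X\<^sub>1\<close>).\<close>
definition interp_norm :: "((int \<Rightarrow> real) \<Rightarrow> ennreal) \<Rightarrow> ((int \<Rightarrow> real) \<Rightarrow> ennreal) \<Rightarrow>
    (real \<Rightarrow> real) \<Rightarrow> (int \<Rightarrow> real) \<Rightarrow> ennreal \<Rightarrow> (int \<Rightarrow> real) \<Rightarrow> ennreal" where
  "interp_norm N0 N1 \<psi> s p x = lp_on p UNIV (\<lambda>k. K_fun N0 N1 (s k) x / ennreal (\<psi> (s k)))"

text \<open>Equality of normed spaces: same sets and equivalent norms.\<close>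
definition equiv_norms :: "('a \<Rightarrow> ennreal) \<Rightarrow> ('a \<Rightarrow> ennreal) \<Rightarrow> bool" where
  "equiv_norms N N' \<longleftrightarrow> (\<exists>c C :: real. c > 0 \<and> C > 0 \<and>
      (\<forall>x. ennreal c * N x \<le> N' x \<and> N' x \<le> ennreal C * N x))"

end

theory Submission
  imports Defs
begin


lemma enn_rpow_ennreal: "0 \<le> x \<Longrightarrow> enn_rpow (ennreal x) r = ennreal (x powr r)"
  by (simp add: enn_rpow_def)

lemma enn_rpow_top[simp]: "enn_rpow top r = top"
  by (simp add: enn_rpow_def)

lemma enn_rpow_0[simp]: "enn_rpow 0 r = 0"
  by (simp add: enn_rpow_def)

lemma enn_rpow_mono: "0 < r \<Longrightarrow> x \<le> y \<Longrightarrow> enn_rpow x r \<le> enn_rpow y r"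
proof (cases y)
  case (real b)
  assume r: "0 < r" and xy: "x \<le> y"
  then obtain a where a: "0 \<le> a" "x = ennreal a" using real
    by (cases x) (auto simp: top_unique)
  have "a \<le> b" using xy a real by simp
  then show ?thesis using a real r by (simp add: enn_rpow_ennreal powr_mono2)
qed (simp add: enn_rpow_def)

lemma enn_rpow_inv: "0 < r \<Longrightarrow> enn_rpow (enn_rpow x r) (1/r) = x"
proof (cases x)
  case (real a)
  assume "0 < r"
  then show ?thesis using real by (simp add: enn_rpow_ennreal powr_powr)
qed simp

lemma enn_rpow_inv': "0 < r \<Longrightarrow> enn_rpow (enn_rpow x (1/r)) r = x"
  using enn_rpow_inv[of "1/r" x] by simp

lemma enn_rpow_le_iff: "0 < r \<Longrightarrow> enn_rpow x r \<le> enn_rpow y r \<longleftrightarrow> x \<le> y"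
  by (metis enn_rpow_inv enn_rpow_mono divide_pos_pos zero_less_one)

lemma enn_rpow_nonzero: "0 < r \<Longrightarrow> x \<noteq> 0 \<Longrightarrow> enn_rpow x r \<noteq> 0"
  by (metis enn_rpow_0 enn_rpow_inv)

lemma enn_rpow_mult: "0 < r \<Longrightarrow> enn_rpow (x * y) r = enn_rpow x r * enn_rpow y r"
proof (cases "x = 0 \<or> y = 0")
  case True then show ?thesis by auto
next
  case False
  assume r: "0 < r"
  show ?thesis
  proof (cases x; cases y)
    fix a b assume "0 \<le> a" "x = ennreal a" "0 \<le> b" "y = ennreal b"
    then show ?thesis
      by (simp add: enn_rpow_ennreal powr_mult ennreal_mult[symmetric])
  qed (use False r enn_rpow_nonzero in \<open>auto simp: ennreal_top_mult ennreal_mult_top\<close>)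
qed

lemma es_summable[simp]: "(f::_ \<Rightarrow> ennreal) summable_on S"
  by (simp add: nonneg_summable_on_complete)

lemma es_mono: "(\<And>i. i \<in> A \<Longrightarrow> f i \<le> g i) \<Longrightarrow> infsum f A \<le> (infsum g A :: ennreal)"
  by (rule infsum_mono) auto

lemma es_subset: "A \<subseteq> B \<Longrightarrow> infsum f A \<le> (infsum f B :: ennreal)"
  by (rule infsum_mono_neutral) auto

lemma es_elem: "i \<in> A \<Longrightarrow> f i \<le> (infsum f A :: ennreal)"
  using es_subset[of "{i}" A f] by simp

lemma es_sup: "infsum f A = (SUP F\<in>{F. finite F \<and> F \<subseteq> A}. sum f F :: ennreal)"
  by (rule nonneg_infsum_complete) auto

lemma es_cmult: "infsum (\<lambda>i. c * f i) A = c * (infsum f A :: ennreal)"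
  unfolding es_sup SUP_mult_left_ennreal by (simp add: sum_distrib_left)

lemma es_add: "infsum (\<lambda>i. f i + g i) A = infsum f A + (infsum g A :: ennreal)"
  by (rule infsum_add) auto

lemma es_sum: "finite F \<Longrightarrow> infsum (\<lambda>j. \<Sum>i\<in>F. f i j) B = (\<Sum>i\<in>F. infsum (f i) B :: ennreal)"
proof (induction F rule: finite_induct)
  case empty then show ?case by simp
next
  case (insert x F)
  then show ?case by (simp add: es_add)
qed

lemma es_swap_le: "infsum (\<lambda>i. infsum (\<lambda>j. f i j) B) A \<le> (infsum (\<lambda>j. infsum (\<lambda>i. f i j) A) B :: ennreal)"
proof -
  have "sum (\<lambda>i. infsum (\<lambda>j. f i j) B) F \<le> infsum (\<lambda>j. infsum (\<lambda>i. f i j) A) B"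
    if F: "finite F" "F \<subseteq> A" for F
  proof -
    have "sum (\<lambda>i. infsum (\<lambda>j. f i j) B) F = infsum (\<lambda>j. \<Sum>i\<in>F. f i j) B"
      using es_sum[OF F(1), of "\<lambda>i j. f i j" B] by simp
    also have "\<dots> \<le> infsum (\<lambda>j. infsum (\<lambda>i. f i j) A) B"
    proof (rule es_mono)
      fix j
      have "(\<Sum>i\<in>F. f i j) = infsum (\<lambda>i. f i j) F" using F by simp
      also have "\<dots> \<le> infsum (\<lambda>i. f i j) A" by (rule es_subset[OF F(2)])
      finally show "(\<Sum>i\<in>F. f i j) \<le> infsum (\<lambda>i. f i j) A" .
    qed
    finally show ?thesis .
  qed
  then show ?thesis
    unfolding es_sup[of "\<lambda>i. infsum (\<lambda>j. f i j) B" A] by (auto intro!: SUP_least)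
qed

lemma es_swap: "infsum (\<lambda>i. infsum (\<lambda>j. f i j) B) A = (infsum (\<lambda>j. infsum (\<lambda>i. f i j) A) B :: ennreal)"
  by (rule antisym[OF es_swap_le es_swap_le])

lemma es_indicator: "infsum (\<lambda>i. if i \<in> M then f i else 0) UNIV = (infsum f M :: ennreal)"
  by (rule infsum_cong_neutral) auto

lemma geo_real_inj:
  fixes r :: real and g :: "'a \<Rightarrow> nat"
  assumes "0 \<le> r" "r < 1" "finite F" "inj_on g F"
  shows "(\<Sum>d\<in>F. r ^ g d) \<le> 1 / (1 - r)"
proof -
  have "(\<Sum>d\<in>F. r ^ g d) = (\<Sum>n\<in>g ` F. r ^ n)"
    using assms by (simp add: sum.reindex)
  also have "\<dots> \<le> (\<Sum>n. r ^ n)"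
    by (rule sum_le_suminf) (use assms in \<open>auto intro: summable_geometric\<close>)
  also have "\<dots> = 1 / (1 - r)" using assms by (simp add: suminf_geometric)
  finally show ?thesis .
qed

lemma geo_int:
  fixes r :: real
  assumes "0 \<le> r" "r \<le> 3/4"
  shows "infsum (\<lambda>d::int. ennreal (r ^ nat \<bar>d\<bar>)) UNIV \<le> 8"
proof -
  have "sum (\<lambda>d::int. ennreal (r ^ nat \<bar>d\<bar>)) F \<le> 8" if F: "finite F" for F
  proof -
    let ?P = "F \<inter> {0..}" and ?N = "F \<inter> {..<0}"
    have b: "1 / (1 - r) \<le> 4" using assms by (simp add: field_simps)
    have "(\<Sum>d\<in>F. r ^ nat \<bar>d\<bar>) = (\<Sum>d\<in>?P. r ^ nat \<bar>d\<bar>) + (\<Sum>d\<in>?N. r ^ nat \<bar>d\<bar>)"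
      using F by (subst sum.union_disjoint[symmetric]) (auto intro: sum.cong)
    also have "\<dots> \<le> 4 + 4"
    proof (rule add_mono)
      have "inj_on (\<lambda>d::int. nat \<bar>d\<bar>) ?P" by (auto simp: inj_on_def)
      then show "(\<Sum>d\<in>?P. r ^ nat \<bar>d\<bar>) \<le> 4"
        using geo_real_inj[of r ?P "\<lambda>d. nat \<bar>d\<bar>"] assms F b by auto
      have "inj_on (\<lambda>d::int. nat \<bar>d\<bar>) ?N" by (auto simp: inj_on_def)
      then show "(\<Sum>d\<in>?N. r ^ nat \<bar>d\<bar>) \<le> 4"
        using geo_real_inj[of r ?N "\<lambda>d. nat \<bar>d\<bar>"] assms F b by auto
    qed
    finally have "(\<Sum>d\<in>F. r ^ nat \<bar>d\<bar>) \<le> 8" by simp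
    then have "ennreal (\<Sum>d\<in>F. r ^ nat \<bar>d\<bar>) \<le> ennreal 8" by (rule ennreal_leI)
    then show ?thesis using assms
      by (subst sum_ennreal) auto
  qed
  then show ?thesis unfolding es_sup by (auto intro!: SUP_least)
qed

lemma p_real_ge1: "1 \<le> p \<Longrightarrow> p \<noteq> top \<Longrightarrow> 1 \<le> enn2real p"
  using enn2real_mono[of 1 p] by (simp add: top.not_eq_extremum)

lemma lp_fin: "p \<noteq> top \<Longrightarrow> lp_on p A f = enn_rpow (infsum (\<lambda>i. enn_rpow (f i) (enn2real p)) A) (1 / enn2real p)"
  by (simp add: lp_on_def)

lemma lp_top: "lp_on top A f = (SUP i\<in>A. f i)"
  by (simp add: lp_on_def)

lemma lp_mono_subset:
  assumes p: "1 \<le> p" and AB: "A \<subseteq> B" and fg: "\<And>i. i \<in> A \<Longrightarrow> f i \<le> g i"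
  shows "lp_on p A f \<le> lp_on p B g"
proof (cases "p = top")
  case True
  then show ?thesis using AB fg by (simp add: lp_top SUP_subset_mono)
next
  case False
  let ?r = "enn2real p"
  have r: "0 < ?r" using p_real_ge1[OF p False] by simp
  have "infsum (\<lambda>i. enn_rpow (f i) ?r) A \<le> infsum (\<lambda>i. enn_rpow (g i) ?r) A"
    by (rule es_mono) (use fg r enn_rpow_mono in auto)
  also have "\<dots> \<le> infsum (\<lambda>i. enn_rpow (g i) ?r) B" by (rule es_subset[OF AB])
  finally show ?thesis using False r by (simp add: lp_fin enn_rpow_mono)
qed

lemma lp_mono: "1 \<le> p \<Longrightarrow> (\<And>i. i \<in> A \<Longrightarrow> f i \<le> g i) \<Longrightarrow> lp_on p A f \<le> lp_on p A g"
  by (rule lp_mono_subset) auto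

lemma lp_subset: "1 \<le> p \<Longrightarrow> A \<subseteq> B \<Longrightarrow> lp_on p A f \<le> lp_on p B f"
  by (rule lp_mono_subset) auto

lemma lp_elem:
  assumes p: "1 \<le> p" and i: "i \<in> A"
  shows "f i \<le> lp_on p A f"
proof (cases "p = top")
  case True
  then show ?thesis using i by (simp add: lp_top SUP_upper)
next
  case False
  let ?r = "enn2real p"
  have r: "0 < ?r" using p_real_ge1[OF p False] by simp
  have "enn_rpow (f i) ?r \<le> infsum (\<lambda>i. enn_rpow (f i) ?r) A" by (rule es_elem[OF i])
  then have "enn_rpow (enn_rpow (f i) ?r) (1/?r) \<le> enn_rpow (infsum (\<lambda>i. enn_rpow (f i) ?r) A) (1/?r)"
    using r by (simp add: enn_rpow_mono)
  then show ?thesis using r False by (simp add: enn_rpow_inv lp_fin)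
qed

lemma lp_hom:
  assumes p: "1 \<le> p" and c: "c \<noteq> top"
  shows "lp_on p A (\<lambda>i. c * f i) = c * lp_on p A f"
proof (cases "p = top")
  case True
  then show ?thesis by (simp add: lp_top SUP_mult_left_ennreal)
next
  case False
  let ?r = "enn2real p"
  have r: "0 < ?r" using p_real_ge1[OF p False] by simp
  have "infsum (\<lambda>i. enn_rpow (c * f i) ?r) A = enn_rpow c ?r * infsum (\<lambda>i. enn_rpow (f i) ?r) A"
    using r by (simp add: enn_rpow_mult es_cmult)
  then show ?thesis using r False by (simp add: lp_fin enn_rpow_mult enn_rpow_inv)
qed

lemma enn_rpow_max: "0 < r \<Longrightarrow> enn_rpow (max x y) r = max (enn_rpow x r) (enn_rpow y r)"
  by (metis enn_rpow_le_iff max.absorb1 max.absorb2 nle_le)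

lemma le_2x: "(x::ennreal) \<le> 2 * x"
  by (simp add: mult_2)

lemma lp_max:
  assumes p: "1 \<le> p"
  shows "lp_on p A (\<lambda>i. max (f i) (g i)) \<le> 2 * (lp_on p A f + lp_on p A g)"
proof (cases "p = top")
  case True
  have "(SUP i\<in>A. max (f i) (g i)) \<le> (SUP i\<in>A. f i) + (SUP i\<in>A. g i)"
  proof (rule SUP_least)
    fix i assume "i \<in> A"
    then have "f i \<le> (SUP i\<in>A. f i)" "g i \<le> (SUP i\<in>A. g i)" by (auto intro: SUP_upper)
    then show "max (f i) (g i) \<le> (SUP i\<in>A. f i) + (SUP i\<in>A. g i)"
      by (simp add: add_increasing add_increasing2)
  qed
  then have "(SUP i\<in>A. max (f i) (g i)) \<le> 2 * ((SUP i\<in>A. f i) + (SUP i\<in>A. g i))"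
    by (rule order_trans[OF _ le_2x])
  then show ?thesis using True by (simp only: lp_top)
next
  case False
  let ?r = "enn2real p"
  have r: "1 \<le> ?r" using p_real_ge1[OF p False] by simp
  then have r0: "0 < ?r" by simp
  define S where "S = infsum (\<lambda>i. enn_rpow (f i) ?r) A"
  define T where "T = infsum (\<lambda>i. enn_rpow (g i) ?r) A"
  have "infsum (\<lambda>i. enn_rpow (max (f i) (g i)) ?r) A \<le> infsum (\<lambda>i. enn_rpow (f i) ?r + enn_rpow (g i) ?r) A"
    by (rule es_mono) (simp add: enn_rpow_max[OF r0] add_increasing add_increasing2)
  also have "\<dots> = S + T" by (simp add: es_add S_def T_def)
  also have "\<dots> \<le> 2 * max S T" by (simp add: mult_2 add_mono)
  finally have 1: "lp_on p A (\<lambda>i. max (f i) (g i)) \<le> enn_rpow (2 * max S T) (1/?r)"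
    using False r0 by (simp add: lp_fin enn_rpow_mono)
  have "enn_rpow (2 * max S T) (1/?r) = enn_rpow 2 (1/?r) * max (enn_rpow S (1/?r)) (enn_rpow T (1/?r))"
    using r0 by (simp add: enn_rpow_mult enn_rpow_max)
  also have "\<dots> \<le> 2 * (enn_rpow S (1/?r) + enn_rpow T (1/?r))"
  proof (rule mult_mono)
    have "enn_rpow 2 (1/?r) = ennreal (2 powr (1/?r))"
      using enn_rpow_ennreal[of 2 "1/?r"] by simp
    also have "2 powr (1/?r) \<le> 2 powr 1" using r by (intro powr_mono) auto
    then have "ennreal (2 powr (1/?r)) \<le> 2" by (simp add: ennreal_leI[of _ 2, simplified])
    finally show "enn_rpow 2 (1/?r) \<le> 2" .
  qed (auto simp: add_increasing add_increasing2)
  finally show ?thesis using 1 False by (simp add: lp_fin S_def T_def)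
qed

lemma lp_add:
  assumes p: "1 \<le> p"
  shows "lp_on p A (\<lambda>i. f i + g i) \<le> 4 * (lp_on p A f + lp_on p A g)"
proof -
  have "lp_on p A (\<lambda>i. f i + g i) \<le> lp_on p A (\<lambda>i. 2 * max (f i) (g i))"
    by (rule lp_mono[OF p]) (simp add: mult_2 add_mono)
  also have "\<dots> = 2 * lp_on p A (\<lambda>i. max (f i) (g i))" by (rule lp_hom[OF p]) simp
  also have "\<dots> \<le> 2 * (2 * (lp_on p A f + lp_on p A g))" by (rule mult_left_mono[OF lp_max[OF p]]) simp
  finally show ?thesis by (simp add: mult.assoc[symmetric])
qed

lemma lp_reindex:
  assumes "bij_betw h A B"
  shows "lp_on p A (\<lambda>k. f (h k)) = lp_on p B f"
proof -
  have "(SUP k\<in>A. f (h k)) = (SUP k\<in>B. f k)"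
    using assms unfolding bij_betw_def by (metis image_image)
  moreover have "infsum (\<lambda>k. enn_rpow (f (h k)) (enn2real p)) A = infsum (\<lambda>k. enn_rpow (f k) (enn2real p)) B"
    by (rule infsum_reindex_bij_betw[OF assms])
  ultimately show ?thesis by (simp add: lp_on_def)
qed

lemma lp_shift: "lp_on p UNIV (\<lambda>k. f (k + (1::int))) = lp_on p UNIV f"
  by (rule lp_reindex) (auto simp: bij_betw_def inj_on_def image_def intro: exI[of _ "_ - 1"])

section \<open>The K-functional of the couple (l_q, l_q(1/tt))\<close>

definition mK :: "ennreal \<Rightarrow> (int \<Rightarrow> real) \<Rightarrow> real \<Rightarrow> (int \<Rightarrow> real) \<Rightarrow> ennreal" where
  "mK q tt t x = lp_on q UNIV (\<lambda>i. ennreal (min 1 (t / tt i) * \<bar>x i\<bar>))"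

lemma K_upper:
  assumes q: "1 \<le> q" and tt: "\<And>i. tt i > 0" and t: "t > 0"
  shows "K_fun (lq_norm q) (weighted (lq_norm q) (\<lambda>i. 1 / tt i)) t x \<le> 2 * mK q tt t x"
proof -
  define x0 where "x0 = (\<lambda>i. if tt i \<le> t then x i else 0)"
  have 1: "lq_norm q x0 \<le> mK q tt t x"
    unfolding lq_norm_def mK_def
  proof (rule lp_mono[OF q])
    fix i
    have "\<bar>x0 i\<bar> \<le> min 1 (t / tt i) * \<bar>x i\<bar>"
      using tt[of i] t by (auto simp: x0_def min_def field_simps)
    then show "ennreal \<bar>x0 i\<bar> \<le> ennreal (min 1 (t / tt i) * \<bar>x i\<bar>)" by (rule ennreal_leI)
  qed
  have "ennreal t * weighted (lq_norm q) (\<lambda>i. 1 / tt i) (\<lambda>i. x i - x0 i)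
      = lp_on q UNIV (\<lambda>i. ennreal t * ennreal \<bar>(x i - x0 i) * (1 / tt i)\<bar>)"
    unfolding weighted_def lq_norm_def by (rule lp_hom[OF q, symmetric]) simp
  also have "\<dots> \<le> mK q tt t x"
    unfolding mK_def
  proof (rule lp_mono[OF q])
    fix i
    have "t * \<bar>(x i - x0 i) * (1 / tt i)\<bar> \<le> min 1 (t / tt i) * \<bar>x i\<bar>"
      using tt[of i] t by (auto simp: x0_def min_def field_simps abs_mult)
    then show "ennreal t * ennreal \<bar>(x i - x0 i) * (1 / tt i)\<bar> \<le> ennreal (min 1 (t / tt i) * \<bar>x i\<bar>)"
      using t by (simp add: ennreal_mult[symmetric] ennreal_leI)
  qed
  finally have 2: "ennreal t * weighted (lq_norm q) (\<lambda>i. 1 / tt i) (\<lambda>i. x i - x0 i) \<le> mK q tt t x" .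
  have "K_fun (lq_norm q) (weighted (lq_norm q) (\<lambda>i. 1 / tt i)) t x
      \<le> lq_norm q x0 + ennreal t * weighted (lq_norm q) (\<lambda>i. 1 / tt i) (\<lambda>i. x i - x0 i)"
    unfolding K_fun_def by (rule INF_lower2[of x0]) auto
  also have "\<dots> \<le> mK q tt t x + mK q tt t x" by (rule add_mono[OF 1 2])
  finally show ?thesis by (simp add: mult_2)
qed

lemma quarter_4: "ennreal (1/4) * 4 = 1"
proof -
  have "ennreal (1/4) * 4 = ennreal (1/4) * ennreal 4" by simp
  also have "\<dots> = ennreal (1/4 * 4)" by (rule ennreal_mult[symmetric]) auto
  finally show ?thesis by simp
qed

lemma K_lower:
  assumes q: "1 \<le> q" and tt: "\<And>i. tt i > 0" and t: "t > 0"
  shows "ennreal (1/4) * mK q tt t x \<le> K_fun (lq_norm q) (weighted (lq_norm q) (\<lambda>i. 1 / tt i)) t x"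
  unfolding K_fun_def
proof (rule INF_greatest)
  fix x0 assume -: "x0 \<in> (UNIV :: (int \<Rightarrow> real) set)"
  let ?f = "\<lambda>i. ennreal \<bar>x0 i\<bar>"
  let ?g = "\<lambda>i. ennreal t * ennreal \<bar>(x i - x0 i) * (1 / tt i)\<bar>"
  have "mK q tt t x \<le> lp_on q UNIV (\<lambda>i. ?f i + ?g i)"
    unfolding mK_def
  proof (rule lp_mono[OF q])
    fix i
    have a: "min 1 (t / tt i) * \<bar>x i\<bar> \<le> \<bar>x0 i\<bar> + t * \<bar>(x i - x0 i) * (1 / tt i)\<bar>"
    proof (cases "tt i \<le> t")
      case True
      then have "min 1 (t / tt i) = 1" using tt[of i] by (simp add: min_def field_simps)
      moreover have "\<bar>x i\<bar> \<le> \<bar>x0 i\<bar> + \<bar>x i - x0 i\<bar>" by simp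
      moreover have "\<bar>x i - x0 i\<bar> \<le> t * \<bar>(x i - x0 i) * (1 / tt i)\<bar>"
        using True tt[of i] t by (simp add: abs_mult field_simps mult_right_mono)
      ultimately show ?thesis by simp
    next
      case False
      then have E: "min 1 (t / tt i) = t / tt i" using tt[of i] by (simp add: min_def field_simps)
      have "t / tt i * \<bar>x i\<bar> \<le> t / tt i * (\<bar>x0 i\<bar> + \<bar>x i - x0 i\<bar>)"
        using t tt[of i] by (intro mult_left_mono) auto
      moreover have "t / tt i * \<bar>x0 i\<bar> \<le> \<bar>x0 i\<bar>"
        using False t tt[of i] by (intro mult_left_le_one_le) auto
      moreover have "t / tt i * \<bar>x i - x0 i\<bar> = t * \<bar>(x i - x0 i) * (1 / tt i)\<bar>"
        using tt[of i] by (simp add: abs_mult)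
      moreover have "t / tt i * (\<bar>x0 i\<bar> + \<bar>x i - x0 i\<bar>) = t / tt i * \<bar>x0 i\<bar> + t / tt i * \<bar>x i - x0 i\<bar>"
        by (simp add: distrib_left)
      ultimately show ?thesis unfolding E by linarith
    qed
    show "ennreal (min 1 (t / tt i) * \<bar>x i\<bar>) \<le> ?f i + ?g i"
      using ennreal_leI[OF a] t by (simp add: ennreal_mult[symmetric] ennreal_plus[symmetric] del: ennreal_plus)
  qed
  also have "\<dots> \<le> 4 * (lp_on q UNIV ?f + lp_on q UNIV ?g)" by (rule lp_add[OF q])
  also have "lp_on q UNIV ?g = ennreal t * weighted (lq_norm q) (\<lambda>i. 1 / tt i) (\<lambda>i. x i - x0 i)"
    unfolding weighted_def lq_norm_def by (rule lp_hom[OF q]) simp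
  finally have "mK q tt t x \<le> 4 * (lq_norm q x0 + ennreal t * weighted (lq_norm q) (\<lambda>i. 1 / tt i) (\<lambda>i. x i - x0 i))"
    by (simp add: lq_norm_def)
  then have "ennreal (1/4) * mK q tt t x \<le> ennreal (1/4) * (4 * (lq_norm q x0 + ennreal t * weighted (lq_norm q) (\<lambda>i. 1 / tt i) (\<lambda>i. x i - x0 i)))"
    by (rule mult_left_mono) simp
  also have "\<dots> = lq_norm q x0 + ennreal t * weighted (lq_norm q) (\<lambda>i. 1 / tt i) (\<lambda>i. x i - x0 i)"
    by (simp only: mult.assoc[symmetric] quarter_4 mult_1)
  finally show "ennreal (1/4) * mK q tt t x \<le> lq_norm q x0 + ennreal t * weighted (lq_norm q) (\<lambda>i. 1 / tt i) (\<lambda>i. x i - x0 i)" .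
qed




section \<open>Geometric growth of strongly monotone sequences\<close>

lemma ratio_le: "(b::real) > 0 \<Longrightarrow> a / b \<le> 1/2 \<Longrightarrow> 2 * a \<le> b"
  by (simp add: field_simps)

lemma ratio_ge: "(b::real) > 0 \<Longrightarrow> a / b \<ge> 2 \<Longrightarrow> 2 * b \<le> a"
  by (simp add: field_simps)

lemma geo_inc:
  fixes b :: "int \<Rightarrow> real"
  assumes "\<And>k. 2 * b k \<le> b (k + 1)" "\<And>k. b k > 0"
  shows "b j * 2 ^ n \<le> b (j + int n)"
proof (induction n)
  case 0 then show ?case by simp
next
  case (Suc n)
  have "b j * 2 ^ Suc n = 2 * (b j * 2 ^ n)" by simp
  also have "\<dots> \<le> 2 * b (j + int n)" using Suc by simp
  also have "\<dots> \<le> b (j + int n + 1)" by (rule assms(1))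
  also have "j + int n + 1 = j + int (Suc n)" by simp
  finally show ?case .
qed

lemma geo_inc':
  fixes b :: "int \<Rightarrow> real"
  assumes "\<And>k. 2 * b k \<le> b (k + 1)" "\<And>k. b k > 0" "j \<le> k"
  shows "b j * 2 ^ nat (k - j) \<le> b k"
  using geo_inc[of b j "nat (k - j)", OF assms(1,2)] assms(3) by simp

lemma geo_dec:
  fixes b :: "int \<Rightarrow> real"
  assumes "\<And>k. 2 * b (k + 1) \<le> b k" "\<And>k. b k > 0"
  shows "b (j + int n) * 2 ^ n \<le> b j"
proof (induction n)
  case 0 then show ?case by simp
next
  case (Suc n)
  have e: "j + int (Suc n) = j + int n + 1" by simp
  have "b (j + int (Suc n)) * 2 ^ Suc n = (2 * b (j + int n + 1)) * 2 ^ n" unfolding e by simp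
  also have "\<dots> \<le> b (j + int n) * 2 ^ n" by (rule mult_right_mono[OF assms(1)]) simp
  also have "\<dots> \<le> b j" by (rule Suc)
  finally show ?case .
qed

lemma geo_dec':
  fixes b :: "int \<Rightarrow> real"
  assumes "\<And>k. 2 * b (k + 1) \<le> b k" "\<And>k. b k > 0" "j \<le> k"
  shows "b k * 2 ^ nat (k - j) \<le> b j"
  using geo_dec[of b j "nat (k - j)", OF assms(1,2)] assms(3) by simp

lemma transition:
  fixes s :: "int \<Rightarrow> real"
  shows "s a \<le> t \<Longrightarrow> t < s (a + int n) \<Longrightarrow> \<exists>j. s j \<le> t \<and> t < s (j + 1)"
proof (induction n arbitrary: a)
  case 0 then show ?case by simp
next
  case (Suc n)
  show ?case
  proof (cases "t < s (a + 1)")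
    case True then show ?thesis using Suc by blast
  next
    case False
    then have "s (a + 1) \<le> t" by simp
    moreover have "t < s (a + 1 + int n)" using Suc(3) by (simp add: add.assoc)
    ultimately show ?thesis using Suc.IH by blast
  qed
qed

locale dseq =
  fixes \<psi> :: "real \<Rightarrow> real" and s :: "int \<Rightarrow> real"
  assumes psi_pos: "\<And>t. t > 0 \<Longrightarrow> \<psi> t > 0"
    and psi_mono: "mono_on {0<..} \<psi>"
    and psi_anti: "antimono_on {0<..} (\<lambda>t. \<psi> t / t)"
    and disc: "discretizing_seq \<psi> s"
begin

lemma s_pos: "s k > 0"
  using disc by (simp add: discretizing_seq_def strongly_increasing_def)

lemma s_step: "2 * s k \<le> s (k + 1)"
proof -
  have "s (k + 1) / s k \<ge> 2" using disc by (simp add: discretizing_seq_def strongly_increasing_def)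
  then show ?thesis using ratio_ge s_pos by blast
qed

lemma ps_pos: "\<psi> (s k) > 0" using psi_pos s_pos by blast

lemma ps_step: "2 * \<psi> (s k) \<le> \<psi> (s (k + 1))"
proof -
  have "\<psi> (s (k + 1)) / \<psi> (s k) \<ge> 2" using disc by (simp add: discretizing_seq_def strongly_increasing_def)
  then show ?thesis using ratio_ge ps_pos by blast
qed

lemma qs_pos: "\<psi> (s k) / s k > 0" using ps_pos s_pos by simp

lemma qs_step: "2 * (\<psi> (s (k + 1)) / s (k + 1)) \<le> \<psi> (s k) / s k"
proof -
  have "(\<psi> (s (k + 1)) / s (k + 1)) / (\<psi> (s k) / s k) \<le> 1 / 2"
    using disc by (simp add: discretizing_seq_def strongly_decreasing_def)
  then show ?thesis using ratio_le qs_pos by blast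
qed

lemma s_mono: "j \<le> k \<Longrightarrow> s j \<le> s k"
proof -
  assume jk: "j \<le> k"
  have "1 \<le> (2::real) ^ nat (k - j)" by simp
  then have "s j * 1 \<le> s j * 2 ^ nat (k - j)" by (rule mult_left_mono) (use s_pos[of j] in simp)
  also have "\<dots> \<le> s k" using geo_inc'[of s j k] s_step s_pos jk by blast
  finally show ?thesis by simp
qed

lemma psi_le: "0 < a \<Longrightarrow> a \<le> b \<Longrightarrow> \<psi> a \<le> \<psi> b"
  using psi_mono by (auto intro: mono_onD)

lemma q_le: "0 < a \<Longrightarrow> a \<le> b \<Longrightarrow> \<psi> b / b \<le> \<psi> a / a"
  using monotone_onD[OF psi_anti, of a b] by auto

lemma cover: "t > 0 \<Longrightarrow> \<exists>j. s j \<le> t \<and> t < s (j + 1)"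
proof -
  assume t: "t > 0"
  obtain n where n: "s 0 / t < 2 ^ n" using real_arch_pow[of 2 "s 0 / t"] by auto
  have "s (- int n) * 2 ^ n \<le> s 0"
    using geo_inc[of s "- int n" n] s_step s_pos by simp
  then have a1: "s (- int n) \<le> s 0 / 2 ^ n" by (simp add: pos_le_divide_eq)
  have "s 0 < t * 2 ^ n" using n t by (simp add: pos_divide_less_eq mult.commute)
  then have "s 0 / 2 ^ n < t" by (simp add: pos_divide_less_eq)
  then have a: "s (- int n) \<le> t" using a1 by simp
  obtain m where m: "t / s 0 < 2 ^ m" using real_arch_pow[of 2 "t / s 0"] by auto
  have "s 0 * 2 ^ m \<le> s (int m)"
    using geo_inc[of s 0 m] s_step s_pos by simp
  then have b: "t < s (- int n + int (n + m))"
    using m t s_pos[of 0] by (simp add: field_simps)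
  show ?thesis by (rule transition[OF a b])
qed

definition aa :: "int \<Rightarrow> real \<Rightarrow> real" where
  "aa k t = min 1 (s k / t) * \<psi> t / \<psi> (s k)"

lemma aa_nonneg: "t > 0 \<Longrightarrow> aa k t \<ge> 0"
  unfolding aa_def using psi_pos[of t] ps_pos[of k] s_pos[of k] by simp

lemma aa_decay:
  assumes t: "s j \<le> t" "t \<le> s (j + 1)"
  shows "aa k t * 2 ^ nat \<bar>k - j\<bar> \<le> 2"
proof (cases "k \<le> j")
  case True
  have tpos: "t > 0" using t s_pos[of j] by simp
  have skt: "s k \<le> t" using s_mono[OF True] t by simp
  define N where "N = nat (j - k)"
  have e: "aa k t = (\<psi> t / t) / (\<psi> (s k) / s k)"
    unfolding aa_def using skt tpos s_pos[of k] by (simp add: min_def field_simps)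
  have f1: "\<psi> t / t \<le> \<psi> (s j) / s j" using q_le[OF s_pos t(1)] .
  have f2: "(\<psi> (s j) / s j) * 2 ^ N \<le> \<psi> (s k) / s k"
    unfolding N_def by (rule geo_dec'[of "\<lambda>k. \<psi> (s k) / s k"]) (use qs_step qs_pos True in auto)
  have f3: "nat \<bar>k - j\<bar> = N" using True by (simp add: N_def)
  have f4: "\<psi> t / t * 2 ^ N \<le> (\<psi> (s j) / s j) * 2 ^ N" by (rule mult_right_mono[OF f1]) simp
  have "aa k t * 2 ^ nat \<bar>k - j\<bar> = (\<psi> t / t * 2 ^ N) / (\<psi> (s k) / s k)"
    unfolding e f3 by simp
  also have "\<dots> \<le> 1"
    using f2 f4 qs_pos[of k] by (simp only: divide_le_eq_1_pos)
  finally have "aa k t * 2 ^ nat \<bar>k - j\<bar> \<le> 1" .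
  then show ?thesis by simp
next
  case False
  have tpos: "t > 0" using t s_pos[of j] by simp
  have "s (j + 1) \<le> s k" using False by (intro s_mono) simp
  then have ptk: "\<psi> t \<le> \<psi> (s k)"
    using t tpos by (intro psi_le) auto
  have "aa k t \<le> \<psi> t / \<psi> (s k)"
    unfolding aa_def using ps_pos[of k] psi_pos[OF tpos]
    by (simp add: divide_right_mono mult_left_le_one_le)
  also have "\<psi> t \<le> \<psi> (s (j + 1))" using t tpos by (intro psi_le) auto
  then have "\<psi> t / \<psi> (s k) \<le> \<psi> (s (j + 1)) / \<psi> (s k)" using ps_pos[of k] by (simp add: divide_right_mono)
  finally have A: "aa k t \<le> \<psi> (s (j + 1)) / \<psi> (s k)" .
  have B: "\<psi> (s (j + 1)) * 2 ^ nat (k - (j + 1)) \<le> \<psi> (s k)"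
    by (rule geo_inc'[of "\<lambda>k. \<psi> (s k)"]) (use ps_step ps_pos False in auto)
  have C: "(2::real) ^ nat \<bar>k - j\<bar> = 2 * 2 ^ nat (k - (j + 1))"
    using False by (simp add: power_Suc[symmetric] Suc_nat_eq_nat_zadd1 del: power_Suc)
  have "aa k t * 2 ^ nat \<bar>k - j\<bar> \<le> \<psi> (s (j + 1)) / \<psi> (s k) * (2 * 2 ^ nat (k - (j + 1)))"
    unfolding C by (rule mult_right_mono[OF A]) simp
  also have "\<dots> \<le> 2" using B ps_pos[of k] by (simp add: field_simps)
  finally show ?thesis .
qed

lemma aa_big:
  assumes t: "s k \<le> t" "t \<le> s (k + 1)"
  shows "1/2 \<le> aa k t \<or> 1/2 \<le> aa (k + 1) t"
proof -
  have tpos: "t > 0" using t s_pos[of k] by simp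
  obtain Z1 Z2 where Z: "Z1 \<union> Z2 = (UNIV :: int set)"
    "\<forall>k\<in>Z1. \<psi> (s (k + 1)) \<le> 2 * \<psi> (s k)"
    "\<forall>k\<in>Z2. \<psi> (s k) / s k \<le> 2 * (\<psi> (s (k + 1)) / s (k + 1))"
    using disc unfolding discretizing_seq_def by blast
  show ?thesis
  proof (cases "k \<in> Z1")
    case True
    then have z: "\<psi> (s (k + 1)) \<le> 2 * \<psi> (s k)" using Z by auto
    have "aa (k + 1) t = \<psi> t / \<psi> (s (k + 1))"
      unfolding aa_def using t tpos by (simp add: min_def field_simps)
    moreover have "\<psi> (s k) \<le> \<psi> t" using t s_pos[of k] by (intro psi_le) auto
    ultimately have "\<psi> (s (k + 1)) \<le> 2 * \<psi> t" and e: "aa (k + 1) t = \<psi> t / \<psi> (s (k + 1))"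
      using z by auto
    then have "1/2 \<le> aa (k + 1) t" using ps_pos[of "k+1"] unfolding e by (simp add: le_divide_eq)
    then show ?thesis by simp
  next
    case False
    then have "k \<in> Z2" using Z(1) by auto
    then have z: "\<psi> (s k) / s k \<le> 2 * (\<psi> (s (k + 1)) / s (k + 1))" using Z by auto
    have e: "aa k t = (\<psi> t / t) / (\<psi> (s k) / s k)"
      unfolding aa_def using t tpos s_pos[of k] by (simp add: min_def field_simps)
    have "\<psi> (s (k + 1)) / s (k + 1) \<le> \<psi> t / t" using t tpos by (intro q_le) auto
    then have h: "\<psi> (s k) / s k \<le> 2 * (\<psi> t / t)" using z by linarith
    have "1/2 \<le> aa k t" unfolding e pos_le_divide_eq[OF qs_pos[of k]] using h by linarith
    then show ?thesis by simp
  qed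
qed

end


lemma pow_powr: "0 < (x::real) \<Longrightarrow> (x ^ n) powr r = (x powr r) ^ n"
  by (simp add: powr_realpow[symmetric] powr_powr mult.commute)

lemma geo_shift:
  fixes r :: real
  assumes "0 \<le> r" "r \<le> 3/4"
  shows "infsum (\<lambda>j::int. ennreal (r ^ nat \<bar>k - j\<bar>)) UNIV \<le> 8"
proof -
  have "bij_betw (\<lambda>j. k - j) UNIV (UNIV :: int set)"
    by (auto simp: bij_betw_def inj_on_def image_def intro: exI[of _ "k - _"])
  then have "infsum (\<lambda>j::int. ennreal (r ^ nat \<bar>k - j\<bar>)) UNIV = infsum (\<lambda>d::int. ennreal (r ^ nat \<bar>d\<bar>)) UNIV"
    by (rule infsum_reindex_bij_betw[where f = "\<lambda>d. ennreal (r ^ nat \<bar>d\<bar>)"])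
  then show ?thesis using geo_int[OF assms] by simp
qed

lemma powr34: "1 \<le> r \<Longrightarrow> (3/4::real) powr r \<le> 3/4"
  using powr_mono'[of 1 r "3/4::real"] by simp

lemma enn_rpow_const_le: "1 \<le> r \<Longrightarrow> 1 \<le> c \<Longrightarrow> enn_rpow (ennreal c) (1/r) \<le> ennreal c"
proof -
  assume r: "1 \<le> r" and c: "1 \<le> c"
  have "c powr (1/r) \<le> c powr 1" using r c by (intro powr_mono) auto
  then show ?thesis using c by (simp add: enn_rpow_ennreal ennreal_leI)
qed

lemma conv_sup_lp:
  assumes p: "1 \<le> p"
  shows "lp_on p UNIV (\<lambda>k. SUP j. ennreal ((3/4) ^ nat \<bar>k - j\<bar>) * B j) \<le> 8 * lp_on p UNIV B"
proof (cases "p = top")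
  case True
  have "(SUP k. SUP j. ennreal ((3/4) ^ nat \<bar>k - j\<bar>) * B j) \<le> (SUP j. B j)"
  proof (intro SUP_least)
    fix k j :: int
    have "ennreal ((3/4) ^ nat \<bar>k - j\<bar>) * B j \<le> 1 * B j"
      by (rule mult_right_mono) (auto simp: power_le_one)
    also have "\<dots> \<le> (SUP j. B j)" by (simp add: SUP_upper)
    finally show "ennreal ((3/4) ^ nat \<bar>k - j\<bar>) * B j \<le> (SUP j. B j)" .
  qed
  also have "\<dots> \<le> 8 * (SUP j. B j)" by (rule order_trans[OF le_2x]) (simp add: mult_right_mono)
  finally show ?thesis using True by (simp add: lp_top)
next
  case False
  let ?r = "enn2real p"
  have r: "1 \<le> ?r" using p_real_ge1[OF p False] .
  then have r0: "0 < ?r" by simp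
  define u where "u k j = ennreal ((3/4) ^ nat \<bar>k - j\<bar>) * B j" for k j
  have 1: "enn_rpow (SUP j. u k j) ?r \<le> infsum (\<lambda>j. ennreal (((3/4) powr ?r) ^ nat \<bar>k - j\<bar>) * enn_rpow (B j) ?r) UNIV" for k
  proof -
    have "(SUP j. u k j) \<le> lp_on p UNIV (u k)" by (intro SUP_least lp_elem[OF p]) auto
    then have "enn_rpow (SUP j. u k j) ?r \<le> enn_rpow (lp_on p UNIV (u k)) ?r" by (rule enn_rpow_mono[OF r0])
    also have "\<dots> = infsum (\<lambda>j. enn_rpow (u k j) ?r) UNIV"
      using False r0 by (simp add: lp_fin enn_rpow_inv')
    also have "\<dots> = infsum (\<lambda>j. ennreal (((3/4) powr ?r) ^ nat \<bar>k - j\<bar>) * enn_rpow (B j) ?r) UNIV"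
      unfolding u_def using r0 by (simp add: enn_rpow_mult enn_rpow_ennreal pow_powr)
    finally show ?thesis .
  qed
  have "infsum (\<lambda>k. enn_rpow (SUP j. u k j) ?r) UNIV
      \<le> infsum (\<lambda>k. infsum (\<lambda>j. ennreal (((3/4) powr ?r) ^ nat \<bar>k - j\<bar>) * enn_rpow (B j) ?r) UNIV) UNIV"
    by (rule es_mono[OF 1])
  also have "\<dots> = infsum (\<lambda>j. infsum (\<lambda>k. ennreal (((3/4) powr ?r) ^ nat \<bar>k - j\<bar>) * enn_rpow (B j) ?r) UNIV) UNIV"
    by (rule es_swap)
  also have "\<dots> = infsum (\<lambda>j. infsum (\<lambda>k. ennreal (((3/4) powr ?r) ^ nat \<bar>j - k\<bar>)) UNIV * enn_rpow (B j) ?r) UNIV"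
    by (simp add: es_cmult[symmetric] mult.commute abs_minus_commute)
  also have "\<dots> \<le> infsum (\<lambda>j. 8 * enn_rpow (B j) ?r) UNIV"
    by (intro es_mono mult_right_mono geo_shift) (use powr34[OF r] in auto)
  also have "\<dots> = 8 * infsum (\<lambda>j. enn_rpow (B j) ?r) UNIV" by (rule es_cmult)
  finally have 2: "infsum (\<lambda>k. enn_rpow (SUP j. u k j) ?r) UNIV \<le> 8 * infsum (\<lambda>j. enn_rpow (B j) ?r) UNIV" .
  have "lp_on p UNIV (\<lambda>k. SUP j. u k j) \<le> enn_rpow (8 * infsum (\<lambda>j. enn_rpow (B j) ?r) UNIV) (1/?r)"
    using False r0 2 by (simp add: lp_fin enn_rpow_mono)
  also have "\<dots> = enn_rpow (ennreal 8) (1/?r) * lp_on p UNIV B"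
    using False r0 by (simp add: lp_fin enn_rpow_mult)
  also have "\<dots> \<le> 8 * lp_on p UNIV B"
    using enn_rpow_const_le[OF r, of 8] by (simp add: mult_right_mono)
  finally show ?thesis unfolding u_def .
qed


lemma powr23: "1 \<le> r \<Longrightarrow> (2/3::real) powr r \<le> 3/4"
  using powr_mono'[of 1 r "2/3::real"] by simp

lemma half_split: "(1/2::real) ^ n = (2/3) ^ n * (3/4) ^ n"
  by (simp add: power_mult_distrib[symmetric])

lemma block_bound:
  assumes q: "1 \<le> q"
    and Y: "\<And>i. 0 \<le> Y i" and G: "\<And>i. 0 \<le> G i"
    and jb: "\<And>i. i \<in> M (jb i)"
    and dec: "\<And>i. G i \<le> 2 * (1/2) ^ nat \<bar>k - jb i\<bar> * Y i"
  shows "lp_on q UNIV (\<lambda>i. ennreal (G i))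
     \<le> 16 * (SUP j. ennreal ((3/4) ^ nat \<bar>k - j\<bar>) * lp_on q (M j) (\<lambda>i. ennreal (Y i)))"
proof -
  define B where "B j = lp_on q (M j) (\<lambda>i. ennreal (Y i))" for j
  define V where "V = (SUP j. ennreal ((3/4) ^ nat \<bar>k - j\<bar>) * B j)"
  have BV: "ennreal ((3/4) ^ nat \<bar>k - j\<bar>) * B j \<le> V" for j
    unfolding V_def by (rule SUP_upper) simp
  have "lp_on q UNIV (\<lambda>i. ennreal (G i)) \<le> 16 * V"
  proof (cases "q = top")
    case True
    have "(SUP i. ennreal (G i)) \<le> 2 * V"
    proof (rule SUP_least)
      fix i
      let ?n = "nat \<bar>k - jb i\<bar>"
      have "(1/2::real) ^ ?n \<le> (3/4) ^ ?n" by (rule power_mono) auto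
      then have "2 * ((1/2::real) ^ ?n * Y i) \<le> 2 * ((3/4) ^ ?n * Y i)"
        by (intro mult_left_mono mult_right_mono Y) auto
      then have "G i \<le> 2 * ((3/4) ^ ?n * Y i)"
        using dec[of i] by (simp add: mult.assoc)
      then have "ennreal (G i) \<le> ennreal (2 * ((3/4) ^ ?n * Y i))" by (rule ennreal_leI)
      also have "\<dots> = ennreal 2 * (ennreal ((3/4) ^ ?n) * ennreal (Y i))"
        using Y[of i] by (simp add: ennreal_mult)
      finally have "ennreal (G i) \<le> 2 * (ennreal ((3/4) ^ ?n) * ennreal (Y i))" by simp
      also have "ennreal (Y i) \<le> B (jb i)" unfolding B_def by (rule lp_elem[OF q jb])
      then have "2 * (ennreal ((3/4) ^ ?n) * ennreal (Y i)) \<le> 2 * (ennreal ((3/4) ^ ?n) * B (jb i))"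
        by (intro mult_left_mono) auto
      also have "\<dots> \<le> 2 * V" by (intro mult_left_mono BV) simp
      finally show "ennreal (G i) \<le> 2 * V" .
    qed
    also have "\<dots> \<le> 16 * V" by (rule mult_right_mono) auto
    finally show ?thesis using True by (simp add: lp_top)
  next
    case False
    let ?r = "enn2real q"
    have r: "1 \<le> ?r" using p_real_ge1[OF q False] .
    then have r0: "0 < ?r" by simp
    define C where "C j = 2 powr ?r * ((2/3) powr ?r) ^ nat \<bar>k - j\<bar>" for j
    have C0: "0 \<le> C j" for j by (simp add: C_def)
    have 1: "enn_rpow (ennreal (G i)) ?r \<le> infsum (\<lambda>j. if i \<in> M j then ennreal (C j * ((3/4) powr ?r) ^ nat \<bar>k - j\<bar>) * enn_rpow (ennreal (Y i)) ?r else 0) UNIV" for i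
    proof -
      let ?n = "nat \<bar>k - jb i\<bar>"
      have "G i powr ?r \<le> (2 * (1/2) ^ ?n * Y i) powr ?r"
        by (rule powr_mono2) (use r0 G dec in auto)
      also have "\<dots> = C (jb i) * ((3/4) powr ?r) ^ ?n * Y i powr ?r"
        unfolding C_def half_split
        by (simp add: powr_mult pow_powr)
      finally have "ennreal (G i powr ?r) \<le> ennreal (C (jb i) * ((3/4) powr ?r) ^ ?n) * ennreal (Y i powr ?r)"
        using C0 by (simp add: ennreal_mult[symmetric] ennreal_leI)
      also have "\<dots> = (if i \<in> M (jb i) then ennreal (C (jb i) * ((3/4) powr ?r) ^ ?n) * enn_rpow (ennreal (Y i)) ?r else 0)"
        using jb Y by (simp add: enn_rpow_ennreal)
      also have "\<dots> \<le> infsum (\<lambda>j. if i \<in> M j then ennreal (C j * ((3/4) powr ?r) ^ nat \<bar>k - j\<bar>) * enn_rpow (ennreal (Y i)) ?r else 0) UNIV"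
        by (rule es_elem[where f = "\<lambda>j. if i \<in> M j then ennreal (C j * ((3/4) powr ?r) ^ nat \<bar>k - j\<bar>) * enn_rpow (ennreal (Y i)) ?r else 0"]) simp
      finally show ?thesis using G by (simp add: enn_rpow_ennreal)
    qed
    have 2: "ennreal (C j * ((3/4) powr ?r) ^ nat \<bar>k - j\<bar>) * enn_rpow (B j) ?r \<le> ennreal (C j) * enn_rpow V ?r" for j
    proof -
      have "ennreal (C j * ((3/4) powr ?r) ^ nat \<bar>k - j\<bar>) * enn_rpow (B j) ?r
          = ennreal (C j) * enn_rpow (ennreal ((3/4) ^ nat \<bar>k - j\<bar>) * B j) ?r"
        using C0[of j] r0 by (simp add: ennreal_mult enn_rpow_mult enn_rpow_ennreal pow_powr mult.assoc)
      also have "\<dots> \<le> ennreal (C j) * enn_rpow V ?r"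
        by (intro mult_left_mono enn_rpow_mono[OF r0] BV) simp
      finally show ?thesis .
    qed
    have "infsum (\<lambda>i. enn_rpow (ennreal (G i)) ?r) UNIV
        \<le> infsum (\<lambda>i. infsum (\<lambda>j. if i \<in> M j then ennreal (C j * ((3/4) powr ?r) ^ nat \<bar>k - j\<bar>) * enn_rpow (ennreal (Y i)) ?r else 0) UNIV) UNIV"
      by (rule es_mono[OF 1])
    also have "\<dots> = infsum (\<lambda>j. infsum (\<lambda>i. if i \<in> M j then ennreal (C j * ((3/4) powr ?r) ^ nat \<bar>k - j\<bar>) * enn_rpow (ennreal (Y i)) ?r else 0) UNIV) UNIV"
      by (rule es_swap)
    also have "\<dots> = infsum (\<lambda>j. ennreal (C j * ((3/4) powr ?r) ^ nat \<bar>k - j\<bar>) * infsum (\<lambda>i. if i \<in> M j then enn_rpow (ennreal (Y i)) ?r else 0) UNIV) UNIV"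
    proof (rule infsum_cong)
      fix j
      have "(\<lambda>i. if i \<in> M j then ennreal (C j * ((3/4) powr ?r) ^ nat \<bar>k - j\<bar>) * enn_rpow (ennreal (Y i)) ?r else 0)
          = (\<lambda>i. ennreal (C j * ((3/4) powr ?r) ^ nat \<bar>k - j\<bar>) * (if i \<in> M j then enn_rpow (ennreal (Y i)) ?r else 0))"
        by auto
      then show "infsum (\<lambda>i. if i \<in> M j then ennreal (C j * ((3/4) powr ?r) ^ nat \<bar>k - j\<bar>) * enn_rpow (ennreal (Y i)) ?r else 0) UNIV
          = ennreal (C j * ((3/4) powr ?r) ^ nat \<bar>k - j\<bar>) * infsum (\<lambda>i. if i \<in> M j then enn_rpow (ennreal (Y i)) ?r else 0) UNIV"
        by (simp only: es_cmult)
    qed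
    also have "\<dots> = infsum (\<lambda>j. ennreal (C j * ((3/4) powr ?r) ^ nat \<bar>k - j\<bar>) * enn_rpow (B j) ?r) UNIV"
      using False r0 by (simp add: es_indicator B_def lp_fin enn_rpow_inv')
    also have "\<dots> \<le> infsum (\<lambda>j. ennreal (C j) * enn_rpow V ?r) UNIV"
      by (rule es_mono[OF 2])
    also have "\<dots> = infsum (\<lambda>j. (ennreal (2 powr ?r) * enn_rpow V ?r) * ennreal (((2/3) powr ?r) ^ nat \<bar>k - j\<bar>)) UNIV"
    proof (rule infsum_cong)
      fix j
      have e: "ennreal (C j) = ennreal (2 powr ?r) * ennreal (((2/3) powr ?r) ^ nat \<bar>k - j\<bar>)"
        unfolding C_def by (rule ennreal_mult) auto
      show "ennreal (C j) * enn_rpow V ?r = (ennreal (2 powr ?r) * enn_rpow V ?r) * ennreal (((2/3) powr ?r) ^ nat \<bar>k - j\<bar>)"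
        unfolding e by (simp only: mult.assoc mult.commute mult.left_commute)
    qed
    also have "\<dots> = (ennreal (2 powr ?r) * enn_rpow V ?r) * infsum (\<lambda>j. ennreal (((2/3) powr ?r) ^ nat \<bar>k - j\<bar>)) UNIV"
      by (rule es_cmult)
    also have "\<dots> \<le> (ennreal (2 powr ?r) * enn_rpow V ?r) * 8"
      by (intro mult_left_mono geo_shift) (use powr23[OF r] in auto)
    also have "\<dots> = ennreal (8 * 2 powr ?r) * enn_rpow V ?r"
    proof -
      have "ennreal (8 * 2 powr ?r) = ennreal 8 * ennreal (2 powr ?r)" by (rule ennreal_mult) auto
      then show ?thesis by (simp only: ennreal_numeral mult.assoc mult.commute mult.left_commute)
    qed
    finally have 3: "infsum (\<lambda>i. enn_rpow (ennreal (G i)) ?r) UNIV \<le> ennreal (8 * 2 powr ?r) * enn_rpow V ?r" .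
    have "lp_on q UNIV (\<lambda>i. ennreal (G i)) \<le> enn_rpow (ennreal (8 * 2 powr ?r) * enn_rpow V ?r) (1/?r)"
      using False r0 3 by (simp add: lp_fin enn_rpow_mono)
    also have "\<dots> = ennreal ((8 * 2 powr ?r) powr (1/?r)) * V"
      using r0 by (simp add: enn_rpow_mult enn_rpow_ennreal enn_rpow_inv[OF r0])
    also have "(8 * 2 powr ?r) powr (1/?r) = 8 powr (1/?r) * 2"
      using r0 by (simp add: powr_mult powr_powr)
    also have "8 powr (1/?r) \<le> 8 powr 1" using r by (intro powr_mono) auto
    then have "ennreal (8 powr (1/?r) * 2) \<le> 16" by (simp add: ennreal_leI[of _ 16, simplified])
    then have "ennreal (8 powr (1/?r) * 2) * V \<le> 16 * V" by (rule mult_right_mono) simp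
    finally show ?thesis .
  qed
  then show ?thesis unfolding V_def B_def .
qed


lemma half_le: "1/2 \<le> (a::real) \<Longrightarrow> 0 \<le> y \<Longrightarrow> y \<le> 2 * (a * y)"
proof -
  assume a: "1/2 \<le> a" and y: "0 \<le> y"
  have "1 * y \<le> (2 * a) * y" by (rule mult_right_mono) (use a y in auto)
  then show ?thesis by (simp add: mult.assoc)
qed

lemma e2: "0 \<le> b \<Longrightarrow> y \<le> 2 * b \<Longrightarrow> ennreal y \<le> 2 * ennreal b"
  by (metis ennreal_leI ennreal_mult zero_le_numeral ennreal_numeral)

lemma div_e: "0 < c \<Longrightarrow> X / ennreal c = ennreal (1 / c) * X"
  by (simp add: divide_ennreal_def inverse_ennreal mult.commute inverse_eq_divide)

lemma inv256: "ennreal (1/256) * 256 = 1"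
proof -
  have "ennreal (1/256) * 256 = ennreal (1/256) * ennreal 256" by simp
  also have "\<dots> = ennreal (1/256 * 256)" by (rule ennreal_mult[symmetric]) auto
  finally show ?thesis by simp
qed

context dseq
begin

lemma main:
  assumes p: "1 \<le> p" and q: "1 \<le> q" and tt: "\<And>i. tt i > 0"
  shows "equiv_norms (interp_norm (lq_norm q) (weighted (lq_norm q) (\<lambda>i. 1 / tt i)) \<psi> s p)
           (weighted (lp_lq_blocks p q (\<lambda>k. {i. s k \<le> tt i \<and> tt i \<le> s (k + 1)})) (\<lambda>i. 1 / \<psi> (tt i)))"
proof -
  define M where "M k = {i. s k \<le> tt i \<and> tt i \<le> s (k + 1)}" for k
  define Y where "Y x i = \<bar>x i\<bar> / \<psi> (tt i)" for x :: "int \<Rightarrow> real" and i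
  define g where "g x k = lp_on q UNIV (\<lambda>i. ennreal (aa k (tt i) * Y x i))" for x k
  define Lg where "Lg x = lp_on p UNIV (g x)" for x
  define I where "I = interp_norm (lq_norm q) (weighted (lq_norm q) (\<lambda>i. 1 / tt i)) \<psi> s p"
  define R where "R = weighted (lp_lq_blocks p q (\<lambda>k. {i. s k \<le> tt i \<and> tt i \<le> s (k + 1)})) (\<lambda>i. 1 / \<psi> (tt i))"
  have ptt: "\<psi> (tt i) > 0" for i using psi_pos tt by blast
  have Y0: "Y x i \<ge> 0" for x i using ptt[of i] by (simp add: Y_def)
  have R_eq: "R x = lp_on p UNIV (\<lambda>k. lp_on q (M k) (\<lambda>i. ennreal (Y x i)))" for x
  proof -
    have "\<bar>x i * (1 / \<psi> (tt i))\<bar> = Y x i" for i using ptt[of i] by (simp add: Y_def abs_mult)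
    then show ?thesis by (simp add: R_def weighted_def lp_lq_blocks_def M_def)
  qed
  have I_eq: "I x = lp_on p UNIV (\<lambda>k. ennreal (1 / \<psi> (s k)) * K_fun (lq_norm q) (weighted (lq_norm q) (\<lambda>i. 1 / tt i)) (s k) x)" for x
    by (simp add: I_def interp_norm_def div_e[OF ps_pos])
  have gm: "g x k = ennreal (1 / \<psi> (s k)) * mK q tt (s k) x" for x k
  proof -
    have "ennreal (1 / \<psi> (s k)) * ennreal (min 1 (s k / tt i) * \<bar>x i\<bar>) = ennreal (aa k (tt i) * Y x i)" for i
    proof -
      have "aa k (tt i) * Y x i = 1 / \<psi> (s k) * (min 1 (s k / tt i) * \<bar>x i\<bar>)"
        unfolding aa_def Y_def using ptt[of i] ps_pos[of k] by (simp add: field_simps)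
      moreover have "0 \<le> min 1 (s k / tt i) * \<bar>x i\<bar>" using s_pos[of k] tt[of i] by simp
      ultimately show ?thesis using ps_pos[of k] by (subst ennreal_mult[symmetric]) auto
    qed
    then show ?thesis unfolding g_def mK_def by (simp add: lp_hom[OF q, symmetric])
  qed
  have KA: "ennreal (1 / \<psi> (s k)) * K_fun (lq_norm q) (weighted (lq_norm q) (\<lambda>i. 1 / tt i)) (s k) x \<le> 2 * g x k" for x k
  proof -
    have "ennreal (1 / \<psi> (s k)) * K_fun (lq_norm q) (weighted (lq_norm q) (\<lambda>i. 1 / tt i)) (s k) x
        \<le> ennreal (1 / \<psi> (s k)) * (2 * mK q tt (s k) x)"
      by (intro mult_left_mono K_upper[OF q tt s_pos]) simp
    then show ?thesis by (simp add: gm mult_ac)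
  qed
  have KB: "g x k \<le> 4 * (ennreal (1 / \<psi> (s k)) * K_fun (lq_norm q) (weighted (lq_norm q) (\<lambda>i. 1 / tt i)) (s k) x)" for x k
  proof -
    have "mK q tt (s k) x = 4 * (ennreal (1/4) * mK q tt (s k) x)"
      by (simp only: mult.assoc[symmetric] mult.commute[of 4] quarter_4 mult_1)
    also have "\<dots> \<le> 4 * K_fun (lq_norm q) (weighted (lq_norm q) (\<lambda>i. 1 / tt i)) (s k) x"
      by (intro mult_left_mono K_lower[OF q tt s_pos]) simp
    finally show ?thesis unfolding gm
      by (metis (no_types, lifting) mult.left_commute mult_left_mono zero_le)
  qed
  have A: "I x \<le> 2 * Lg x" for x
  proof -
    have "I x \<le> lp_on p UNIV (\<lambda>k. 2 * g x k)" unfolding I_eq by (rule lp_mono[OF p KA])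
    also have "\<dots> = 2 * Lg x" unfolding Lg_def by (rule lp_hom[OF p]) simp
    finally show ?thesis .
  qed
  have B: "Lg x \<le> 4 * I x" for x
  proof -
    have "Lg x \<le> lp_on p UNIV (\<lambda>k. 4 * (ennreal (1 / \<psi> (s k)) * K_fun (lq_norm q) (weighted (lq_norm q) (\<lambda>i. 1 / tt i)) (s k) x))"
      unfolding Lg_def by (rule lp_mono[OF p KB])
    also have "\<dots> = 4 * I x" unfolding I_eq by (rule lp_hom[OF p]) simp
    finally show ?thesis .
  qed
  have C: "R x \<le> 32 * Lg x" for x
  proof -
    have blk: "lp_on q (M k) (\<lambda>i. ennreal (Y x i)) \<le> 4 * (g x k + g x (k + 1))" for k
    proof -
      let ?f = "\<lambda>i. ennreal (aa k (tt i) * Y x i)" and ?h = "\<lambda>i. ennreal (aa (k + 1) (tt i) * Y x i)"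
      have "lp_on q (M k) (\<lambda>i. ennreal (Y x i)) \<le> lp_on q (M k) (\<lambda>i. 2 * max (?f i) (?h i))"
      proof (rule lp_mono[OF q])
        fix i assume "i \<in> M k"
        then have "1/2 \<le> aa k (tt i) \<or> 1/2 \<le> aa (k + 1) (tt i)" using aa_big by (simp add: M_def)
        then have "Y x i \<le> 2 * (aa k (tt i) * Y x i) \<or> Y x i \<le> 2 * (aa (k + 1) (tt i) * Y x i)"
          using Y0[of x i] half_le by blast
        then have "ennreal (Y x i) \<le> 2 * ?f i \<or> ennreal (Y x i) \<le> 2 * ?h i"
          using e2[OF mult_nonneg_nonneg[OF aa_nonneg[OF tt] Y0]] by blast
        then show "ennreal (Y x i) \<le> 2 * max (?f i) (?h i)"
        proof (elim disjE)
          assume "ennreal (Y x i) \<le> 2 * ?f i"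
          also have "\<dots> \<le> 2 * max (?f i) (?h i)" by (intro mult_left_mono max.cobounded1) simp
          finally show ?thesis .
        next
          assume "ennreal (Y x i) \<le> 2 * ?h i"
          also have "\<dots> \<le> 2 * max (?f i) (?h i)" by (intro mult_left_mono max.cobounded2) simp
          finally show ?thesis .
        qed
      qed
      also have "\<dots> = 2 * lp_on q (M k) (\<lambda>i. max (?f i) (?h i))" by (rule lp_hom[OF q]) simp
      also have "\<dots> \<le> 2 * (2 * (lp_on q (M k) ?f + lp_on q (M k) ?h))"
        by (intro mult_left_mono lp_max[OF q]) simp
      also have "\<dots> \<le> 2 * (2 * (g x k + g x (k + 1)))"
        unfolding g_def by (intro mult_left_mono add_mono lp_subset[OF q]) auto
      finally show ?thesis by (simp add: mult.assoc[symmetric])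
    qed
    have "R x \<le> lp_on p UNIV (\<lambda>k. 4 * (g x k + g x (k + 1)))"
      unfolding R_eq by (rule lp_mono[OF p blk])
    also have "\<dots> = 4 * lp_on p UNIV (\<lambda>k. g x k + g x (k + 1))" by (rule lp_hom[OF p]) simp
    also have "\<dots> \<le> 4 * (4 * (Lg x + lp_on p UNIV (\<lambda>k. g x (k + 1))))"
      unfolding Lg_def by (intro mult_left_mono lp_add[OF p]) simp
    also have "lp_on p UNIV (\<lambda>k. g x (k + 1)) = Lg x" unfolding Lg_def by (rule lp_shift)
    finally have "R x \<le> 4 * (4 * (Lg x + Lg x))" .
    also have "Lg x + Lg x = 2 * Lg x" by (rule mult_2[symmetric])
    also have "4 * (4 * (2 * Lg x)) = 32 * Lg x" by (simp add: mult.assoc[symmetric])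
    finally show ?thesis .
  qed
  have D: "Lg x \<le> 128 * R x" for x
  proof -
    define jb where "jb i = (SOME j. s j \<le> tt i \<and> tt i < s (j + 1))" for i
    have jb: "s (jb i) \<le> tt i \<and> tt i < s (jb i + 1)" for i
      unfolding jb_def by (rule someI_ex) (rule cover[OF tt])
    have jbM: "i \<in> M (jb i)" for i using jb[of i] by (simp add: M_def)
    have gk: "g x k \<le> 16 * (SUP j. ennreal ((3/4) ^ nat \<bar>k - j\<bar>) * lp_on q (M j) (\<lambda>i. ennreal (Y x i)))" for k
    proof -
      have G0: "0 \<le> aa k (tt i) * Y x i" for i using aa_nonneg[OF tt] Y0 by simp
      have dec: "aa k (tt i) * Y x i \<le> 2 * (1/2) ^ nat \<bar>k - jb i\<bar> * Y x i" for i
      proof -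
      have "aa k (tt i) * 2 ^ nat \<bar>k - jb i\<bar> \<le> 2" using aa_decay jb[of i] by auto
      then have "aa k (tt i) \<le> 2 * (1/2) ^ nat \<bar>k - jb i\<bar>"
        by (simp add: power_one_over field_simps)
      then show "aa k (tt i) * Y x i \<le> 2 * (1/2) ^ nat \<bar>k - jb i\<bar> * Y x i"
        by (rule mult_right_mono) (rule Y0)
      qed
      show ?thesis unfolding g_def by (rule block_bound[OF q Y0[of x] G0 jbM dec])
    qed
    have "Lg x \<le> lp_on p UNIV (\<lambda>k. 16 * (SUP j. ennreal ((3/4) ^ nat \<bar>k - j\<bar>) * lp_on q (M j) (\<lambda>i. ennreal (Y x i))))"
      unfolding Lg_def by (rule lp_mono[OF p gk])
    also have "\<dots> = 16 * lp_on p UNIV (\<lambda>k. SUP j. ennreal ((3/4) ^ nat \<bar>k - j\<bar>) * lp_on q (M j) (\<lambda>i. ennreal (Y x i)))"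
      by (rule lp_hom[OF p]) simp
    also have "\<dots> \<le> 16 * (8 * R x)"
      unfolding R_eq by (intro mult_left_mono conv_sup_lp[OF p]) simp
    finally show ?thesis by (simp add: mult.assoc[symmetric])
  qed
  have fin: "ennreal (1/256) * I x \<le> R x \<and> R x \<le> ennreal 128 * I x" for x
  proof
    have "ennreal (1/256) * I x \<le> ennreal (1/256) * (2 * (128 * R x))"
      by (intro mult_left_mono order_trans[OF A] mult_left_mono D) auto
    also have "2 * (128 * R x) = 256 * R x" by (simp add: mult.assoc[symmetric])
    also have "ennreal (1/256) * (256 * R x) = R x" by (simp only: mult.assoc[symmetric] inv256 mult_1)
    finally show "ennreal (1/256) * I x \<le> R x" .
    have "R x \<le> 32 * (4 * I x)" by (rule order_trans[OF C mult_left_mono[OF B]]) simp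
    then show "R x \<le> ennreal 128 * I x" by (simp add: mult.assoc[symmetric])
  qed
  show ?thesis
    unfolding equiv_norms_def I_def[symmetric] R_def[symmetric]
    by (rule exI[of _ "1/256"], rule exI[of _ 128]) (use fin in simp)
qed

end


theorem corollary3p5:
  fixes p q :: ennreal
    and \<phi>0 \<phi>1 \<phi> :: "real \<Rightarrow> real"
    and \<tau> z tt :: "int \<Rightarrow> real"
  assumes "1 \<le> p" and "1 \<le> q"
    and "nd_quasi_concave \<phi>0" and "nd_quasi_concave \<phi>1" and "nd_quasi_concave \<phi>"
    and "discretizing_seq \<phi>0 \<tau>"
    and "discretizing_seq \<phi>1 z"
    and "discretizing_seq (compose_qc \<phi> \<phi>0 \<phi>1) tt"
  shows "equiv_norms
           (interp_norm (lq_norm q) (weighted (lq_norm q) (\<lambda>i. 1 / tt i)) \<phi>0 \<tau> p)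
           (weighted (lp_lq_blocks p q (\<lambda>k. {i. \<tau> k \<le> tt i \<and> tt i \<le> \<tau> (k + 1)}))
              (\<lambda>i. 1 / \<phi>0 (tt i)))
       \<and> equiv_norms
           (interp_norm (lq_norm q) (weighted (lq_norm q) (\<lambda>i. 1 / tt i)) \<phi>1 z p)
           (weighted (lp_lq_blocks p q (\<lambda>k. {i. z k \<le> tt i \<and> tt i \<le> z (k + 1)}))
              (\<lambda>i. 1 / \<phi>1 (tt i)))"
  proof -
  have tt: "\<And>i. tt i > 0"
    using assms(8) by (simp add: discretizing_seq_def strongly_increasing_def)
  have d0: "dseq \<phi>0 \<tau>"
    by unfold_locales (use assms(3,6) in \<open>auto simp: nd_quasi_concave_def\<close>)
  have d1: "dseq \<phi>1 z"
    by unfold_locales (use assms(4,7) in \<open>auto simp: nd_quasi_concave_def\<close>)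
  show ?thesis
    using dseq.main[OF d0 assms(1,2), of tt] dseq.main[OF d1 assms(1,2), of tt] tt by blast
qed

end
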